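(* Let $H_1,\dots,H_n$ be null hypotheses indexed by $\mathcal V=\{1,\dots,n\}$, and for each $v\in\mathcal V$ let $p_v$ be an observed random variable. Let $\bar{\mathcal S}=\{v: H_v \text{ is true}\}$ and $\mathcal S=\mathcal V\setminus\bar{\mathcal S}$. Let $\mathcal G=(\mathcal V,\mathcal E)$ be a directed acyclic graph such that whenever $H_v$ is false and $w$ is an ancestor of $v$ in $\mathcal G$, $H_w$ is also false (equivalently, if $v\in\bar{\mathcal S}$ then every descendant of $v$ is in $\bar{\mathcal S}$). For each $v$, let $\mathcal C_v$ be the set consisting of $v$ and all its descendants in $\mathcal G$, let $f_v:\mathbb R^{|\mathcal V|}\to\mathbb R$ be an arbitrary (measurable) function, and define \[F_v(c;x_{\mathcal V\setminus\mathcal C_v})=\Pr\big(f_v(u_{\mathcal C_v},x_{\mathcal V\setminus\mathcal C_v})\le c\big),\qquad \tilde p_v=F_v\big(f_v(p_{\mathcal C_v},p_{\mathcal V\setminus\mathcal C_v});p_{\mathcal V\setminus\mathcal C_v}\big),\] where $u_{\mathcal C_v}=\{u_w\}_{w\in\mathcal C_v}$ are i.i.d. $\mathrm{Uniform}[0,1]$. Assume that the null $p$-values $\{p_v\}_{v\in\bar{\mathcal S}}$ are mutually independent and independent of the nonnull $p$-values $\{p_v\}_{v\in\mathcal S}$. (a) If the null $p$-values are i.i.d. $\mathrm{Uniform}[0,1]$, then $\tilde p_v$ is super-uniform for every $v\in\bar{\mathcal S}$. (b) If the null $p$-values are super-uniform and, for every value of $p_{\mathcal V\setminus\mathcal C_v}$,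 $f_v$ is nondecreasing in $p_{\mathcal C_v}$ (entrywise), then $\tilde p_v$ is super-uniform for every $v\in\bar{\mathcal S}$.
   Context: A random variable $X$ is super-uniform if $\Pr(X\le c)\le c$ for all $c\in[0,1]$. *)

theory Defs
  imports "HOL-Probability.Probability"
begin

definition super_uniform :: "'a measure \<Rightarrow> ('a \<Rightarrow> real) \<Rightarrow> bool" where
  "super_uniform M X \<longleftrightarrow> (\<forall>c\<in>{0..1::real}. measure M {x \<in> space M. X x \<le> c} \<le> c)"

definition unif01 :: "real measure" where
  "unif01 = uniform_measure lborel {0..1}"

definition desc_set :: "('i \<times> 'i) set \<Rightarrow> 'i \<Rightarrow> 'i set" where
  "desc_set E v = {v} \<union> {w. (v, w) \<in> E\<^sup>+}"

definition merge_on :: "'i set \<Rightarrow> ('i \<Rightarrow> real) \<Rightarrow> ('i \<Rightarrow> real) \<Rightarrow> ('i \<Rightarrow> real)" where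
  "merge_on C u x = (\<lambda>w. if w \<in> C then u w else x w)"

definition F_fun :: "'i set \<Rightarrow> (('i \<Rightarrow> real) \<Rightarrow> real) \<Rightarrow> real \<Rightarrow> ('i \<Rightarrow> real) \<Rightarrow> real" where
  "F_fun C f c x =
     measure (PiM C (\<lambda>_. unif01)) {u \<in> space (PiM C (\<lambda>_. unif01)). f (merge_on C u x) \<le> c}"

definition ptilde :: "('i \<times> 'i) set \<Rightarrow> ('i \<Rightarrow> ('i \<Rightarrow> real) \<Rightarrow> real)
    \<Rightarrow> ('i \<Rightarrow> 'a \<Rightarrow> real) \<Rightarrow> 'i \<Rightarrow> 'a \<Rightarrow> real" where
  "ptilde E f p v = (\<lambda>\<omega>. F_fun (desc_set E v) (f v) (f v (\<lambda>w. p w \<omega>)) (\<lambda>w. p w \<omega>))"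

end

theory Submission
  imports Defs
begin

lemma pit:
  fixes h :: "'a \<Rightarrow> real"
  assumes Q: "prob_space Q" and h: "h \<in> borel_measurable Q" and c: "0 \<le> c"
  shows "measure Q {u\<in>space Q. measure Q {u'\<in>space Q. h u' \<le> h u} \<le> c} \<le> c"
proof -
  interpret prob_space Q by (rule Q)
  note h[measurable]
  have hm: "{u\<in>space Q. h u \<le> t} \<in> events" for t
  proof -
    have "h -` {..t} \<inter> space Q \<in> events" by (rule measurable_sets[OF h]) (rule atMost_borel)
    moreover have "h -` {..t} \<inter> space Q = {u\<in>space Q. h u \<le> t}" by auto
    ultimately show ?thesis by simp
  qed
  define G where "G t = measure Q {u\<in>space Q. h u \<le> t}" for t
  have Gmono: "G s \<le> G t" if "s \<le> t" for s t
    unfolding G_def using that hm by (intro finite_measure_mono) (auto intro: order_trans)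
  define T where "T = {t. G t \<le> c}"
  have Tdown: "s \<in> T" if "t \<in> T" "s \<le> t" for s t
    using that Gmono[of s t] by (auto simp: T_def)
  define S where "S = {u\<in>space Q. G (h u) \<le> c}"
  have S_eq: "{u\<in>space Q. measure Q {u'\<in>space Q. h u' \<le> h u} \<le> c} = S"
    by (simp add: S_def G_def)
  have key: "measure Q S \<le> c" if tt: "mono tt" "\<And>n. tt n \<in> T"
      and cov: "S \<subseteq> (\<Union>n. {u\<in>space Q. h u \<le> tt n})" for tt :: "nat \<Rightarrow> real"
  proof -
    define A where "A n = {u\<in>space Q. h u \<le> tt n}" for n
    have Ameas: "range A \<subseteq> sets Q" using hm by (auto simp: A_def)
    have Ainc: "incseq A"
      using tt(1) unfolding A_def incseq_def mono_def by (auto intro: order_trans)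
    have lim: "(\<lambda>n. measure Q (A n)) \<longlonglongrightarrow> measure Q (\<Union>n. A n)"
      by (rule finite_Lim_measure_incseq[OF Ameas Ainc])
    have "measure Q (\<Union>n. A n) \<le> c"
    proof (rule LIMSEQ_le_const2[OF lim])
      show "\<exists>N. \<forall>n\<ge>N. measure Q (A n) \<le> c"
        using tt(2) by (auto simp: T_def G_def A_def)
    qed
    moreover have "measure Q S \<le> measure Q (\<Union>n. A n)"
      using cov Ameas by (intro finite_measure_mono) (auto simp: A_def)
    ultimately show ?thesis by simp
  qed
  have inT: "u \<in> S \<Longrightarrow> h u \<in> T" for u by (simp add: S_def T_def)
  have "measure Q S \<le> c"
  proof (cases "T = {}")
    case True
    then have "S = {}" using inT by blast
    then show ?thesis using c by simp
  next
    case Tne: False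
    show ?thesis
    proof (cases "bdd_above T")
      case False
      have nT: "real n \<in> T" for n
      proof -
        from False obtain t where "t \<in> T" "real n < t"
          unfolding bdd_above_def by (meson not_le)
        then show ?thesis using Tdown by auto
      qed
      show ?thesis
      proof (rule key[of "\<lambda>n. real n"])
        show "mono (\<lambda>n. real n)" by (simp add: mono_def)
        show "real n \<in> T" for n by (rule nT)
        show "S \<subseteq> (\<Union>n. {u\<in>space Q. h u \<le> real n})"
          using S_def real_arch_simple by blast
      qed
    next
      case bdd: True
      define s where "s = Sup T"
      have le_s: "t \<in> T \<Longrightarrow> t \<le> s" for t using bdd by (simp add: s_def cSup_upper)
      show ?thesis
      proof (cases "s \<in> T")
        case True
        show ?thesis
        proof (rule key[of "\<lambda>n. s"])
          show "mono (\<lambda>n::nat. s)" by (simp add: mono_def)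
          show "s \<in> T" for n::nat by (rule True)
          show "S \<subseteq> (\<Union>n::nat. {u\<in>space Q. h u \<le> s})"
            using inT le_s S_def by auto
        qed
      next
        case False
        show ?thesis
        proof (rule key[of "\<lambda>n. s - 1 / real (Suc n)"])
          show "mono (\<lambda>n. s - 1 / real (Suc n))"
            by (auto simp: mono_def intro!: divide_left_mono)
          show "s - 1 / real (Suc n) \<in> T" for n
          proof -
            have "s - 1 / real (Suc n) < Sup T" by (simp add: s_def)
            then obtain t where "t \<in> T" "s - 1 / real (Suc n) < t"
              using less_cSup_iff[OF Tne bdd] by blast
            then show ?thesis using Tdown by auto
          qed
          show "S \<subseteq> (\<Union>n. {u\<in>space Q. h u \<le> s - 1 / real (Suc n)})"
          proof
            fix u assume u: "u \<in> S"
            have "h u < s" using inT[OF u] le_s False by (metis order_le_less)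
            then obtain n where "inverse (real (Suc n)) < s - h u"
              using reals_Archimedean by (metis diff_gt_0_iff_gt)
            then show "u \<in> (\<Union>n. {u\<in>space Q. h u \<le> s - 1 / real (Suc n)})"
              using u S_def by (auto simp: inverse_eq_divide intro!: exI[of _ n])
          qed
        qed
      qed
    qed
  qed
  then show ?thesis using S_eq by simp
qed

lemma unif01_prob: "prob_space unif01"
  unfolding unif01_def by (rule prob_space_uniform_measure) auto

lemma sets_unif01[simp, measurable_cong]: "sets unif01 = sets borel"
  by (simp add: unif01_def)

lemma space_unif01[simp]: "space unif01 = UNIV"
  by (simp add: unif01_def)

lemma emeasure_unif01:
  assumes A: "A \<in> sets borel" shows "emeasure unif01 A = emeasure lborel (A \<inter> {0..1})"
proof -
  have A': "A \<in> sets lborel" using A by (simp only: sets_lborel)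
  have I: "{0..1::real} \<in> sets lborel" by (simp only: sets_lborel atLeastAtMost_borel)
  have "emeasure unif01 A = emeasure lborel ({0..1} \<inter> A) / emeasure lborel {0..1::real}"
    unfolding unif01_def by (rule emeasure_uniform_measure[OF I A'])
  also have "emeasure lborel {0..1::real} = 1" by simp
  finally show ?thesis by (simp add: divide_ennreal_def Int_commute)
qed

lemma quantile_unif:
  assumes N: "real_distribution N"
    and su: "\<And>t. 0 \<le> t \<Longrightarrow> t \<le> 1 \<Longrightarrow> measure N {..t} \<le> t"
  obtains q where "q \<in> borel_measurable borel" "distr unif01 borel q = N" "\<And>u. u \<le> q u"
proof -
  interpret cdf_distribution N by (simp add: cdf_distribution_def N)
  define q where "q u = (if u \<in> {0<..<1} then I u else u)" for u
  have qm: "q \<in> borel_measurable borel"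
  proof -
    have e: "{x. x \<in> {0<..<1::real}} = {0<..<1}" by auto
    have s: "{x \<in> space borel. x \<in> {0<..<1::real}} \<in> sets borel"
    proof -
      have "{x \<in> space borel. x \<in> {0<..<1::real}} = {0<..<1}" by auto
      then show ?thesis using greaterThanLessThan_borel by metis
    qed
    have "(\<lambda>u. if u \<in> {0<..<1} then I u else u) \<in> borel_measurable borel"
      unfolding measurable_If_restrict_space_iff[OF s] e
    proof
      show "I \<in> borel_measurable (restrict_space borel {0<..<1})" by (rule measurable_CI)
      show "(\<lambda>u. u) \<in> borel_measurable (restrict_space borel {x. x \<notin> {0<..<1}})"
        by (rule measurable_restrict_space1[OF measurable_ident_sets[OF refl]])
    qed
    then show ?thesis unfolding q_def[abs_def] .
  qed
  have qge: "u \<le> q u" for u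
  proof (cases "u \<in> {0<..<1}")
    case True
    then have u: "0 < u" "u < 1" by auto
    have le: "u \<le> C (I u)" using pseudoinverse[OF u, of "I u"] by blast
    have "u \<le> I u"
    proof (cases "I u < 0")
      case True
      have "C (I u) \<le> C 0" using True by (intro cdf_nondecreasing) linarith
      also have "\<dots> \<le> 0" using su[of 0] unfolding cdf_def by linarith
      finally show ?thesis using le u by linarith
    next
      case False
      show ?thesis
      proof (cases "I u \<le> 1")
        case True
        have "C (I u) \<le> I u" using su[of "I u"] True False unfolding cdf_def by linarith
        then show ?thesis using le by linarith
      next
        case False then show ?thesis using u by linarith
      qed
    qed
    then show ?thesis using True unfolding q_def by simp
  qed (unfold q_def, auto)
  have "distr unif01 borel q = distr (restrict_space lborel {0<..<1::real}) borel I"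
  proof (rule measure_eqI)
    show "sets (distr unif01 borel q) = sets (distr (restrict_space lborel {0<..<1::real}) borel I)"
      by simp
    fix A assume "A \<in> sets (distr unif01 borel q)"
    then have A: "A \<in> sets borel" by simp
    have qA: "q -` A \<in> sets borel" using measurable_sets[OF qm A] by simp
    have "emeasure (distr unif01 borel q) A = emeasure unif01 (q -` A)"
      proof -
      have qm': "q \<in> measurable unif01 borel"
        using qm measurable_cong_sets[OF sets_unif01 refl] by blast
      show ?thesis using emeasure_distr[OF qm' A] by simp
    qed
    also have "\<dots> = emeasure lborel (q -` A \<inter> {0..1})"
      using qA by (rule emeasure_unif01)
    finally have "emeasure (distr unif01 borel q) A = emeasure lborel (q -` A \<inter> {0..1})" .
    also have "\<dots> = emeasure lborel (q -` A \<inter> {0<..<1})"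
    proof (rule emeasure_eq_AE)
      have "AE x in lborel. x \<noteq> (0::real)" "AE x in lborel. x \<noteq> (1::real)"
        by (rule AE_lborel_singleton)+
      then show "AE x in lborel. (x \<in> q -` A \<inter> {0..1}) = (x \<in> q -` A \<inter> {0<..<1})"
      proof eventually_elim
        case (elim x)
        then show ?case by (simp only: Int_iff atLeastAtMost_iff greaterThanLessThan_iff) linarith
      qed
      show "q -` A \<inter> {0..1} \<in> sets lborel" unfolding sets_lborel using qA by (rule sets.Int) (rule atLeastAtMost_borel)
      show "q -` A \<inter> {0<..<1} \<in> sets lborel" unfolding sets_lborel using qA by (rule sets.Int) (rule greaterThanLessThan_borel)
    qed
    also have "\<dots> = emeasure (restrict_space lborel {0<..<1::real}) (I -` A \<inter> {0<..<1})"
    proof -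
      have eq: "q -` A \<inter> {0<..<1} = I -` A \<inter> {0<..<1}"
      proof (intro set_eqI iffI)
        fix x assume "x \<in> q -` A \<inter> {0<..<1}"
        then have x: "q x \<in> A" "x \<in> {0<..<1}" by auto
        have "q x = I x" unfolding q_def using x(2) by (rule if_P)
        then show "x \<in> I -` A \<inter> {0<..<1}" using x by auto
      next
        fix x assume "x \<in> I -` A \<inter> {0<..<1}"
        then have x: "I x \<in> A" "x \<in> {0<..<1}" by auto
        have "q x = I x" unfolding q_def using x(2) by (rule if_P)
        then show "x \<in> q -` A \<inter> {0<..<1}" using x by auto
      qed
      have o: "{0<..<1::real} \<inter> space lborel \<in> sets lborel"
        by (simp only: space_lborel space_borel Int_UNIV_right sets_lborel greaterThanLessThan_borel)
      show ?thesis unfolding eq by (rule emeasure_restrict_space[OF o, symmetric]) blast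
    qed
    also have "\<dots> = emeasure (distr (restrict_space lborel {0<..<1::real}) borel I) A"
    proof -
      have Im: "I \<in> measurable (restrict_space lborel {0<..<1::real}) borel"
        using measurable_CI measurable_cong_sets[OF sets_restrict_space_cong[OF sets_lborel] refl] by blast
      show ?thesis using emeasure_distr[OF Im A] by (simp add: space_restrict_space)
    qed
    finally show "emeasure (distr unif01 borel q) A = emeasure (distr (restrict_space lborel {0<..<1::real}) borel I) A" .
  qed
  also have "\<dots> = N" by (rule distr_I_eq_M)
  finally show ?thesis using that qm qge by blast
qed

lemma sets_PiM_unif01: "sets (PiM C (\<lambda>_. unif01)) = sets (PiM C (\<lambda>_. borel))"
  by (rule sets_PiM_cong) simp_all

lemma space_PiM_unif01: "space (PiM C (\<lambda>_. unif01)) = space (PiM C (\<lambda>_. borel))"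
  by (simp add: space_PiM)

lemma dominance:
  fixes \<mu> :: "'i \<Rightarrow> real measure" and D :: "('i \<Rightarrow> real) set"
  assumes fin: "finite C"
    and rd: "\<And>i. real_distribution (\<mu> i)"
    and su: "\<And>i t. i \<in> C \<Longrightarrow> 0 \<le> t \<Longrightarrow> t \<le> 1 \<Longrightarrow> measure (\<mu> i) {..t} \<le> t"
    and D: "D \<in> sets (PiM C (\<lambda>_. borel))"
    and down: "\<And>x y. x \<in> D \<Longrightarrow> y \<in> space (PiM C (\<lambda>_. borel)) \<Longrightarrow> (\<forall>w\<in>C. y w \<le> x w) \<Longrightarrow> y \<in> D"
  shows "emeasure (PiM C \<mu>) D \<le> emeasure (PiM C (\<lambda>_. unif01)) D"
proof -
  have "\<forall>i\<in>C. \<exists>q. q \<in> borel_measurable borel \<and> distr unif01 borel q = \<mu> i \<and> (\<forall>u. u \<le> q u)"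
  proof
    fix i assume i: "i \<in> C"
    obtain q where "q \<in> borel_measurable borel" "distr unif01 borel q = \<mu> i" "\<And>u. u \<le> q u"
      using quantile_unif[OF rd[of i] su[OF i]] by metis
    then show "\<exists>q. q \<in> borel_measurable borel \<and> distr unif01 borel q = \<mu> i \<and> (\<forall>u. u \<le> q u)" by blast
  qed
  then obtain q where qm: "\<And>i. i \<in> C \<Longrightarrow> q i \<in> borel_measurable borel"
    and qd: "\<And>i. i \<in> C \<Longrightarrow> distr unif01 borel (q i) = \<mu> i"
    and qge: "\<And>i u. i \<in> C \<Longrightarrow> u \<le> q i u"
    by metis
  have qm': "q i \<in> measurable unif01 borel" if "i \<in> C" for i
    using qm[OF that] measurable_cong_sets[OF sets_unif01 refl] by blast
  define Q where "Q = PiM C (\<lambda>_. unif01)"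
  define qv where "qv x = (\<lambda>i\<in>C. q i (x i))" for x
  interpret U: product_prob_space "\<lambda>_::'i. unif01" by (rule product_prob_spaceI) (rule unif01_prob)
  have pm: "prob_space (\<mu> i)" for i using rd[of i] by (simp add: real_distribution_def real_distribution_axioms_def)
  interpret P: product_prob_space \<mu> by (rule product_prob_spaceI) (rule pm)
  have sm: "sets (\<mu> i) = sets borel" for i using rd[of i] by (simp add: real_distribution_def real_distribution_axioms_def)
  have qvm: "qv \<in> measurable Q (PiM C (\<lambda>_. borel))"
    unfolding qv_def Q_def
  proof (rule measurable_restrict)
    fix i assume i: "i \<in> C"
    show "(\<lambda>x. q i (x i)) \<in> measurable (PiM C (\<lambda>_. unif01)) borel"
      using measurable_compose[OF measurable_component_singleton[OF i] qm'[OF i]] by simp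
  qed
  have eqP: "distr Q (PiM C (\<lambda>_. borel)) qv = PiM C \<mu>"
  proof (rule P.PiM_eqI)
    show "finite C" by (rule fin)
    show "sets (distr Q (PiM C (\<lambda>_. borel)) qv) = sets (PiM C \<mu>)"
      unfolding sets_distr by (rule sets_PiM_cong[OF refl]) (simp only: sm)
    fix A assume A: "\<And>i. i \<in> C \<Longrightarrow> A i \<in> sets (\<mu> i)"
    have A': "\<And>i. i \<in> C \<Longrightarrow> A i \<in> sets borel" using A sm by blast
    have PA: "PiE C A \<in> sets (PiM C (\<lambda>_. borel))"
      using A' fin by (intro sets_PiM_I_finite) auto
    have qA: "q i -` A i \<in> sets unif01" if "i \<in> C" for i
      using measurable_sets[OF qm'[OF that] A'[OF that]] by simp
    have "emeasure (distr Q (PiM C (\<lambda>_. borel)) qv) (PiE C A) = emeasure Q (qv -` PiE C A \<inter> space Q)"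
      by (rule emeasure_distr[OF qvm PA])
    also have "qv -` PiE C A \<inter> space Q = PiE C (\<lambda>i. q i -` A i)"
      unfolding Q_def qv_def by (auto simp: space_PiM PiE_def Pi_def extensional_def)
    also have "emeasure Q (PiE C (\<lambda>i. q i -` A i)) = (\<Prod>i\<in>C. emeasure unif01 (q i -` A i))"
      unfolding Q_def using qA fin by (intro U.emeasure_PiM) auto
    also have "\<dots> = (\<Prod>i\<in>C. emeasure (\<mu> i) (A i))"
    proof (rule prod.cong[OF refl])
      fix i assume i: "i \<in> C"
      have "emeasure (\<mu> i) (A i) = emeasure (distr unif01 borel (q i)) (A i)" using qd[OF i] by simp
      also have "\<dots> = emeasure unif01 (q i -` A i)"
        using emeasure_distr[OF qm'[OF i] A'[OF i]] by simp
      finally show "emeasure unif01 (q i -` A i) = emeasure (\<mu> i) (A i)" by simp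
    qed
    finally show "emeasure (distr Q (PiM C (\<lambda>_. borel)) qv) (PiE C A) = (\<Prod>i\<in>C. emeasure (\<mu> i) (A i))" .
  qed
  have DQ: "D \<in> sets Q" unfolding Q_def sets_PiM_unif01 by (rule D)
  have "emeasure (PiM C \<mu>) D = emeasure (distr Q (PiM C (\<lambda>_. borel)) qv) D" by (simp add: eqP)
  also have "\<dots> = emeasure Q (qv -` D \<inter> space Q)" by (rule emeasure_distr[OF qvm D])
  also have "\<dots> \<le> emeasure Q D"
  proof (rule emeasure_mono[OF _ DQ])
    show "qv -` D \<inter> space Q \<subseteq> D"
    proof
      fix x assume x: "x \<in> qv -` D \<inter> space Q"
      then have xs: "x \<in> space (PiM C (\<lambda>_. borel))" unfolding Q_def space_PiM_unif01 by blast
      show "x \<in> D"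
      proof (rule down)
        show "qv x \<in> D" using x by blast
        show "x \<in> space (PiM C (\<lambda>_. borel))" by (rule xs)
        show "\<forall>w\<in>C. x w \<le> qv x w" using qge by (simp add: qv_def)
      qed
    qed
  qed
  finally show ?thesis unfolding Q_def .
qed

lemma sets_le_const:
  fixes h :: "'a \<Rightarrow> real"
  assumes h: "h \<in> borel_measurable M"
  shows "{x\<in>space M. h x \<le> c} \<in> sets M"
proof -
  have "h -` {..c} \<inter> space M \<in> sets M" by (rule measurable_sets[OF h]) (rule atMost_borel)
  moreover have "h -` {..c} \<inter> space M = {x\<in>space M. h x \<le> c}" by auto
  ultimately show ?thesis by simp
qed

lemma merge_on_measurable:
  assumes "\<And>w. w \<in> S \<Longrightarrow> (\<lambda>x. fa x w) \<in> borel_measurable K"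
      and "\<And>w. w \<notin> S \<Longrightarrow> (\<lambda>x. fb x w) \<in> borel_measurable K"
  shows "(\<lambda>x. merge_on S (fa x) (fb x)) \<in> measurable K (PiM UNIV (\<lambda>_. borel))"
proof -
  have "(\<lambda>x w. (if w \<in> S then fa x w else fb x w)) \<in> measurable K (PiM UNIV (\<lambda>_. borel))"
  proof (rule measurable_PiM_single')
    fix w
    show "(\<lambda>x. if w \<in> S then fa x w else fb x w) \<in> borel_measurable K"
      by (cases "w \<in> S") (simp_all add: assms)
  qed (simp add: PiE_UNIV_domain)
  then show ?thesis unfolding merge_on_def .
qed

lemma comp_meas_PiM:
  assumes "w \<in> S" and "sets (N w) = sets borel"
  shows "(\<lambda>x. x w) \<in> borel_measurable (PiM S N)"
  using measurable_component_singleton[OF assms(1), of N] measurable_cong_sets[OF refl assms(2)] by blast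

lemma F_fun_outside:
  assumes "\<And>w. w \<notin> C \<Longrightarrow> x w = y w"
  shows "F_fun C g t x = F_fun C g t y"
proof -
  have "merge_on C u x = merge_on C u y" for u using assms by (auto simp: merge_on_def)
  then show ?thesis by (simp add: F_fun_def)
qed

lemma F_fun_merge: "F_fun C g t (merge_on C u x) = F_fun C g t x"
  by (rule F_fun_outside) (simp add: merge_on_def)

lemma psi_measurable:
  fixes g :: "('i \<Rightarrow> real) \<Rightarrow> real"
  assumes g: "g \<in> borel_measurable (PiM UNIV (\<lambda>_. borel))"
  shows "(\<lambda>z. F_fun C g (g z) z) \<in> borel_measurable (PiM UNIV (\<lambda>_. borel))"
proof -
  define N where "N = PiM UNIV (\<lambda>_::'i. borel::real measure)"
  define Q where "Q = PiM C (\<lambda>_::'i. unif01)"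
  interpret Q: prob_space Q unfolding Q_def by (intro prob_space_PiM unif01_prob)
  define m where "m x = merge_on C (snd x) (fst x)" for x :: "('i \<Rightarrow> real) \<times> ('i \<Rightarrow> real)"
  have mm: "m \<in> measurable (N \<Otimes>\<^sub>M Q) N"
    unfolding m_def N_def
  proof (rule merge_on_measurable)
    fix w assume w: "w \<in> C"
    show "(\<lambda>x. snd x w) \<in> borel_measurable (PiM UNIV (\<lambda>_. borel) \<Otimes>\<^sub>M Q)"
      using measurable_compose[OF measurable_snd comp_meas_PiM[OF w, of "\<lambda>_. unif01"]]
      unfolding Q_def by simp
  next
    fix w :: 'i
    show "(\<lambda>x. fst x w) \<in> borel_measurable (PiM UNIV (\<lambda>_. borel) \<Otimes>\<^sub>M Q)"
      using measurable_compose[OF measurable_fst comp_meas_PiM[of w UNIV "\<lambda>_. borel"]] by simp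
  qed
  have gN: "g \<in> borel_measurable N" using g by (simp add: N_def)
  define S where "S = {x \<in> space (N \<Otimes>\<^sub>M Q). g (m x) - g (fst x) \<le> 0}"
  have Sm: "S \<in> sets (N \<Otimes>\<^sub>M Q)"
    unfolding S_def
  proof (rule sets_le_const)
    show "(\<lambda>x. g (m x) - g (fst x)) \<in> borel_measurable (N \<Otimes>\<^sub>M Q)"
      using measurable_compose[OF mm gN] measurable_compose[OF measurable_fst gN]
      by (intro borel_measurable_diff) (simp_all add: comp_def)
  qed
  have em: "(\<lambda>z. emeasure Q (Pair z -` S)) \<in> borel_measurable N"
    by (rule Q.measurable_emeasure_Pair[OF Sm])
  have eq: "F_fun C g (g z) z = enn2real (emeasure Q (Pair z -` S))" for z
  proof -
    have "z \<in> space N" by (simp add: N_def space_PiM PiE_UNIV_domain)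
    then have "Pair z -` S = {u \<in> space Q. g (merge_on C u z) \<le> g z}"
      by (auto simp: S_def m_def space_pair_measure)
    then show ?thesis by (simp add: F_fun_def Q_def measure_def)
  qed
  show ?thesis unfolding eq using borel_measurable_enn2real[OF em] by (simp add: N_def)
qed

lemma inner_unif:
  fixes g :: "('i \<Rightarrow> real) \<Rightarrow> real" and y0 :: "'i \<Rightarrow> real"
  assumes g: "g \<in> borel_measurable (PiM UNIV (\<lambda>_. borel))" and c: "0 \<le> c"
  shows "emeasure (PiM C (\<lambda>_. unif01))
     {x\<in>space (PiM C (\<lambda>_. unif01)). F_fun C g (g (merge_on C x y0)) (merge_on C x y0) \<le> c} \<le> ennreal c"
proof -
  define Q where "Q = PiM C (\<lambda>_::'i. unif01)"
  interpret Q: prob_space Q unfolding Q_def by (intro prob_space_PiM unif01_prob)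
  define h where "h x = g (merge_on C x y0)" for x
  have mm: "(\<lambda>x. merge_on C x y0) \<in> measurable Q (PiM UNIV (\<lambda>_. borel))"
  proof (rule merge_on_measurable)
    fix w assume w: "w \<in> C"
    show "(\<lambda>x. x w) \<in> borel_measurable Q" unfolding Q_def by (rule comp_meas_PiM[OF w]) simp
  qed simp
  have hm: "h \<in> borel_measurable Q"
    using measurable_compose[OF mm g] unfolding h_def[abs_def] .
  have eq: "{x\<in>space Q. F_fun C g (g (merge_on C x y0)) (merge_on C x y0) \<le> c}
      = {u\<in>space Q. measure Q {u'\<in>space Q. h u' \<le> h u} \<le> c}"
    by (simp only: F_fun_merge) (simp add: F_fun_def h_def Q_def)
  have "measure Q {u\<in>space Q. measure Q {u'\<in>space Q. h u' \<le> h u} \<le> c} \<le> c"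
    by (rule pit[OF Q.prob_space_axioms hm c])
  then show ?thesis
    unfolding Q_def[symmetric] eq by (simp add: Q.emeasure_eq_measure c)
qed


lemma F_fun_mono:
  fixes g :: "('i \<Rightarrow> real) \<Rightarrow> real"
  assumes g: "g \<in> borel_measurable (PiM UNIV (\<lambda>_. borel))" and st: "s \<le> t"
  shows "F_fun C g s y0 \<le> F_fun C g t y0"
proof -
  define Q where "Q = PiM C (\<lambda>_::'i. unif01)"
  interpret Q: prob_space Q unfolding Q_def by (intro prob_space_PiM unif01_prob)
  have mm: "(\<lambda>x. merge_on C x y0) \<in> measurable Q (PiM UNIV (\<lambda>_. borel))"
  proof (rule merge_on_measurable)
    fix w assume w: "w \<in> C"
    show "(\<lambda>x. x w) \<in> borel_measurable Q" unfolding Q_def by (rule comp_meas_PiM[OF w]) simp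
  qed simp
  have hm: "(\<lambda>x. g (merge_on C x y0)) \<in> borel_measurable Q"
    using measurable_compose[OF mm g] by (simp add: comp_def)
  have "measure Q {u\<in>space Q. g (merge_on C u y0) \<le> s} \<le> measure Q {u\<in>space Q. g (merge_on C u y0) \<le> t}"
    using st by (intro Q.finite_measure_mono sets_le_const[OF hm]) auto
  then show ?thesis by (simp add: F_fun_def Q_def)
qed

lemma inner_dom:
  fixes \<mu> :: "'i \<Rightarrow> real measure" and g :: "('i \<Rightarrow> real) \<Rightarrow> real" and y0 :: "'i \<Rightarrow> real"
  assumes fin: "finite C"
    and rd: "\<And>i. real_distribution (\<mu> i)"
    and su: "\<And>i t. i \<in> C \<Longrightarrow> 0 \<le> t \<Longrightarrow> t \<le> 1 \<Longrightarrow> measure (\<mu> i) {..t} \<le> t"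
    and g: "g \<in> borel_measurable (PiM UNIV (\<lambda>_. borel))" and c: "0 \<le> c"
    and mono: "\<And>y z. (\<forall>w\<in>C. y w \<le> z w) \<Longrightarrow> (\<forall>w. w \<notin> C \<longrightarrow> y w = z w) \<Longrightarrow> g y \<le> g z"
  shows "emeasure (PiM C \<mu>)
     {x\<in>space (PiM C \<mu>). F_fun C g (g (merge_on C x y0)) (merge_on C x y0) \<le> c} \<le> ennreal c"
proof -
  have sm: "sets (\<mu> i) = sets borel" for i using rd[of i] by (simp add: real_distribution_def real_distribution_axioms_def)
  have spm: "space (PiM C \<mu>) = space (PiM C (\<lambda>_. borel))"
    using sets_eq_imp_space_eq[OF sm] by (simp add: space_PiM)
  define D where "D = {x\<in>space (PiM C (\<lambda>_. borel)). F_fun C g (g (merge_on C x y0)) y0 \<le> c}"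
  have eqD: "{x\<in>space (PiM C \<mu>). F_fun C g (g (merge_on C x y0)) (merge_on C x y0) \<le> c} = D"
    unfolding D_def spm by (simp only: F_fun_merge)
  have mm: "(\<lambda>x. merge_on C x y0) \<in> measurable (PiM C (\<lambda>_. borel)) (PiM UNIV (\<lambda>_. borel))"
  proof (rule merge_on_measurable)
    fix w assume w: "w \<in> C"
    show "(\<lambda>x. x w) \<in> borel_measurable (PiM C (\<lambda>_. borel))" by (rule comp_meas_PiM[OF w]) simp
  qed simp
  have Dm: "D \<in> sets (PiM C (\<lambda>_. borel))"
  proof -
    have "(\<lambda>x. F_fun C g (g (merge_on C x y0)) (merge_on C x y0)) \<in> borel_measurable (PiM C (\<lambda>_. borel))"
      using measurable_compose[OF mm psi_measurable[OF g, of C]] by (simp add: comp_def)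
    then have "(\<lambda>x. F_fun C g (g (merge_on C x y0)) y0) \<in> borel_measurable (PiM C (\<lambda>_. borel))"
      by (simp only: F_fun_merge)
    then show ?thesis unfolding D_def by (rule sets_le_const)
  qed
  have down: "y \<in> D" if x: "x \<in> D" and y: "y \<in> space (PiM C (\<lambda>_. borel))" and le: "\<forall>w\<in>C. y w \<le> x w" for x y
  proof -
    have "g (merge_on C y y0) \<le> g (merge_on C x y0)"
      using le by (intro mono) (auto simp: merge_on_def)
    then have "F_fun C g (g (merge_on C y y0)) y0 \<le> F_fun C g (g (merge_on C x y0)) y0"
      by (rule F_fun_mono[OF g])
    then show ?thesis using x y by (auto simp: D_def)
  qed
  have 1: "emeasure (PiM C \<mu>) D \<le> emeasure (PiM C (\<lambda>_. unif01)) D"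
    by (rule dominance[OF fin rd su Dm down]) auto
  have 2: "D = {x\<in>space (PiM C (\<lambda>_. unif01)). F_fun C g (g (merge_on C x y0)) (merge_on C x y0) \<le> c}"
    unfolding D_def space_PiM_unif01 by (simp only: F_fun_merge)
  have 3: "emeasure (PiM C (\<lambda>_. unif01)) D \<le> ennreal c"
    unfolding 2 by (rule inner_unif[OF g c])
  show ?thesis unfolding eqD using 1 3 by (rule order_trans)
qed

lemma core:
  fixes M :: "'a measure" and p :: "'i::finite \<Rightarrow> 'a \<Rightarrow> real" and Sbar C :: "'i set"
    and g :: "('i \<Rightarrow> real) \<Rightarrow> real"
  assumes M: "prob_space M"
    and p_meas: "\<And>v. p v \<in> borel_measurable M"
    and g: "g \<in> borel_measurable (PiM UNIV (\<lambda>_. borel))"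
    and null_indep: "prob_space.indep_vars M (\<lambda>_. borel) p Sbar"
    and nn: "prob_space.indep_var M
         (PiM Sbar (\<lambda>_. borel)) (\<lambda>\<omega>. restrict (\<lambda>v. p v \<omega>) Sbar)
         (PiM (UNIV - Sbar) (\<lambda>_. borel)) (\<lambda>\<omega>. restrict (\<lambda>v. p v \<omega>) (UNIV - Sbar))"
    and CS: "C \<subseteq> Sbar" and Cne: "C \<noteq> {}"
    and c: "0 \<le> c"
    and inner: "\<And>y0. emeasure (PiM C (\<lambda>w. distr M borel (p w)))
       {x\<in>space (PiM C (\<lambda>w. distr M borel (p w))). F_fun C g (g (merge_on C x y0)) (merge_on C x y0) \<le> c} \<le> ennreal c"
  shows "measure M {\<omega>\<in>space M. F_fun C g (g (\<lambda>w. p w \<omega>)) (\<lambda>w. p w \<omega>) \<le> c} \<le> c"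
proof -
  interpret prob_space M by (rule M)
  define \<mu> where "\<mu> w = distr M borel (p w)" for w
  have \<mu>p: "prob_space (\<mu> w)" for w unfolding \<mu>_def by (rule prob_space_distr[OF p_meas])
  have \<mu>s: "sets (\<mu> w) = sets borel" for w by (simp add: \<mu>_def)
  interpret P: product_prob_space \<mu> by (rule product_prob_spaceI) (rule \<mu>p)
  define \<psi> where "\<psi> z = F_fun C g (g z) z" for z
  have \<psi>m: "\<psi> \<in> borel_measurable (PiM UNIV (\<lambda>_. borel))"
    unfolding \<psi>_def[abs_def] by (rule psi_measurable[OF g])
  define PSb where "PSb = PiM Sbar (\<lambda>_::'i. borel::real measure)"
  define PNb where "PNb = PiM (UNIV - Sbar) (\<lambda>_::'i. borel::real measure)"
  define XS where "XS \<omega> = restrict (\<lambda>v. p v \<omega>) Sbar" for \<omega>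
  define XN where "XN \<omega> = restrict (\<lambda>v. p v \<omega>) (UNIV - Sbar)" for \<omega>
  define PS where "PS = PiM Sbar \<mu>"
  define \<nu> where "\<nu> = distr M PNb XN"
  have Sne: "Sbar \<noteq> {}" using CS Cne by blast
  have XSm: "XS \<in> measurable M PSb"
    unfolding XS_def[abs_def] PSb_def by (rule measurable_restrict) (rule p_meas)
  have XNm: "XN \<in> measurable M PNb"
    unfolding XN_def[abs_def] PNb_def by (rule measurable_restrict) (rule p_meas)
  have dS: "distr M PSb XS = PS"
    using indep_vars_iff_distr_eq_PiM'[OF Sne, where M'="\<lambda>_. borel" and X=p] null_indep p_meas
    unfolding PSb_def XS_def[abs_def] PS_def \<mu>_def by blast
  have joint: "distr M (PSb \<Otimes>\<^sub>M PNb) (\<lambda>\<omega>. (XS \<omega>, XN \<omega>)) = PS \<Otimes>\<^sub>M \<nu>"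
    using nn unfolding indep_var_distribution_eq PSb_def[symmetric] PNb_def[symmetric]
       XS_def[symmetric] XN_def[symmetric]
    by (simp add: dS \<nu>_def)
  define \<Phi> where "\<Phi> z = \<psi> (merge_on Sbar (fst z) (snd z))" for z
  have mergem: "(\<lambda>z. merge_on Sbar (fst z) (snd z)) \<in> measurable (PSb \<Otimes>\<^sub>M PNb) (PiM UNIV (\<lambda>_. borel))"
  proof (rule merge_on_measurable)
    fix w assume w: "w \<in> Sbar"
    show "(\<lambda>x. fst x w) \<in> borel_measurable (PSb \<Otimes>\<^sub>M PNb)"
      using measurable_compose[OF measurable_fst comp_meas_PiM[OF w, of "\<lambda>_. borel"]]
      unfolding PSb_def by simp
  next
    fix w assume w: "w \<notin> Sbar"
    then have w': "w \<in> UNIV - Sbar" by simp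
    show "(\<lambda>x. snd x w) \<in> borel_measurable (PSb \<Otimes>\<^sub>M PNb)"
      using measurable_compose[OF measurable_snd comp_meas_PiM[OF w', of "\<lambda>_. borel"]]
      unfolding PNb_def by simp
  qed
  have \<Phi>m: "\<Phi> \<in> borel_measurable (PSb \<Otimes>\<^sub>M PNb)"
    using measurable_compose[OF mergem \<psi>m] unfolding \<Phi>_def[abs_def] by (simp add: comp_def)
  define S0 where "S0 = {z \<in> space (PSb \<Otimes>\<^sub>M PNb). \<Phi> z \<le> c}"
  have S0m: "S0 \<in> sets (PSb \<Otimes>\<^sub>M PNb)" unfolding S0_def by (rule sets_le_const[OF \<Phi>m])
  have Wm: "(\<lambda>\<omega>. (XS \<omega>, XN \<omega>)) \<in> measurable M (PSb \<Otimes>\<^sub>M PNb)"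
    by (rule measurable_Pair[OF XSm XNm])
  have mergeW: "merge_on Sbar (XS \<omega>) (XN \<omega>) = (\<lambda>w. p w \<omega>)" for \<omega>
    by (auto simp: merge_on_def XS_def XN_def)
  have Aeq: "{\<omega>\<in>space M. F_fun C g (g (\<lambda>w. p w \<omega>)) (\<lambda>w. p w \<omega>) \<le> c}
      = (\<lambda>\<omega>. (XS \<omega>, XN \<omega>)) -` S0 \<inter> space M"
    using measurable_space[OF Wm] by (auto simp: S0_def \<Phi>_def mergeW \<psi>_def)
  have "measure M {\<omega>\<in>space M. F_fun C g (g (\<lambda>w. p w \<omega>)) (\<lambda>w. p w \<omega>) \<le> c}
      = measure (PS \<Otimes>\<^sub>M \<nu>) S0"
    unfolding Aeq joint[symmetric] by (rule measure_distr[OF Wm S0m, symmetric])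
  also have "\<dots> \<le> c"
  proof -
    interpret PS: prob_space PS unfolding PS_def by (intro prob_space_PiM \<mu>p)
    interpret N: prob_space \<nu> unfolding \<nu>_def by (rule prob_space_distr[OF XNm])
    interpret PN: pair_prob_space PS \<nu> ..
    have sPS: "sets PS = sets PSb" unfolding PS_def PSb_def by (rule sets_PiM_cong) (simp_all add: \<mu>s)
    have sN: "sets \<nu> = sets PNb" by (simp add: \<nu>_def)
    have spPS: "space PS = space PSb" using sets_eq_imp_space_eq[OF sPS] .
    have spN: "space \<nu> = space PNb" using sets_eq_imp_space_eq[OF sN] .
    have S0m': "S0 \<in> sets (PS \<Otimes>\<^sub>M \<nu>)" using S0m sets_pair_measure_cong[OF sPS sN] by simp
    have inner2: "emeasure PS ((\<lambda>a. (a, b)) -` S0) \<le> ennreal c" if b: "b \<in> space \<nu>" for b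
    proof -
      define R where "R = Sbar - C"
      have RC: "R \<inter> C = {}" "R \<union> C = Sbar" using CS by (auto simp: R_def)
      define A where "A = {a \<in> space PS. \<psi> (merge_on Sbar a b) \<le> c}"
      have sec: "(\<lambda>a. (a, b)) -` S0 = A"
        using b unfolding A_def S0_def \<Phi>_def spPS spN by (auto simp: space_pair_measure)
      have mb: "(\<lambda>a. merge_on Sbar a b) \<in> measurable PS (PiM UNIV (\<lambda>_. borel))"
      proof (rule merge_on_measurable)
        fix w assume w: "w \<in> Sbar"
        show "(\<lambda>x. x w) \<in> borel_measurable PS" unfolding PS_def by (rule comp_meas_PiM[OF w \<mu>s])
      qed simp
      have Am: "A \<in> sets (PiM (R \<union> C) \<mu>)"
        unfolding A_def RC(2) PS_def[symmetric]
        using measurable_compose[OF mb \<psi>m] by (intro sets_le_const) (simp add: comp_def)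
      have "emeasure PS A = emeasure (PiM (R \<union> C) \<mu>) A" by (simp add: PS_def RC(2))
      also have "\<dots> = (\<integral>\<^sup>+x. emeasure (PiM C \<mu>) ((\<lambda>y. merge R C (x, y)) -` A \<inter> space (PiM C \<mu>)) \<partial>PiM R \<mu>)"
        by (rule P.emeasure_fold_integral[OF RC(1) _ _ Am]) simp_all
      also have "\<dots> \<le> (\<integral>\<^sup>+x. ennreal c \<partial>PiM R \<mu>)"
      proof (rule nn_integral_mono)
        fix x assume x: "x \<in> space (PiM R \<mu>)"
        have eqs: "(\<lambda>y. merge R C (x, y)) -` A \<inter> space (PiM C \<mu>)
          = {y\<in>space (PiM C \<mu>). F_fun C g (g (merge_on C y (merge_on Sbar x b))) (merge_on C y (merge_on Sbar x b)) \<le> c}"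
        proof -
          have m1: "merge_on Sbar (merge R C (x, y)) b = merge_on C y (merge_on Sbar x b)" for y
            using CS by (auto simp: merge_on_def merge_def R_def fun_eq_iff)
          have m2: "merge R C (x, y) \<in> space PS" if "y \<in> space (PiM C \<mu>)" for y
            using x that RC unfolding PS_def by (auto simp: space_PiM)
          show ?thesis using m2 unfolding A_def \<psi>_def by (auto simp: m1)
        qed
        show "emeasure (PiM C \<mu>) ((\<lambda>y. merge R C (x, y)) -` A \<inter> space (PiM C \<mu>)) \<le> ennreal c"
          unfolding eqs by (unfold \<mu>_def[abs_def]) (rule inner)
      qed
      also have "\<dots> = ennreal c"
      proof -
        interpret R: prob_space "PiM R \<mu>" by (intro prob_space_PiM \<mu>p)
        show ?thesis by (simp add: R.emeasure_space_1)
      qed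
      finally show ?thesis unfolding sec .
    qed
    have "emeasure (PS \<Otimes>\<^sub>M \<nu>) S0 = (\<integral>\<^sup>+b. emeasure PS ((\<lambda>a. (a, b)) -` S0) \<partial>\<nu>)"
      by (rule PN.emeasure_pair_measure_alt2[OF S0m'])
    also have "\<dots> \<le> (\<integral>\<^sup>+b. ennreal c \<partial>\<nu>)"
      by (rule nn_integral_mono) (rule inner2)
    also have "\<dots> = ennreal c" by (simp add: N.emeasure_space_1)
    finally have "emeasure (PS \<Otimes>\<^sub>M \<nu>) S0 \<le> ennreal c" .
    then show ?thesis using c by (simp add: PN.emeasure_eq_measure)
  qed
  finally show ?thesis .
qed

theorem lemma1:
  fixes M :: "'a measure"
    and p :: "'i::finite \<Rightarrow> 'a \<Rightarrow> real"
    and E :: "('i \<times> 'i) set"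
    and Sbar :: "'i set"
    and f :: "'i \<Rightarrow> ('i \<Rightarrow> real) \<Rightarrow> real"
  assumes "prob_space M"
    and p_meas: "\<And>v. p v \<in> borel_measurable M"
    and dag: "acyclic E"
    and closed: "\<And>v w. v \<in> Sbar \<Longrightarrow> (v, w) \<in> E\<^sup>+ \<Longrightarrow> w \<in> Sbar"
    and f_meas: "\<And>v. f v \<in> borel_measurable (PiM UNIV (\<lambda>_. borel))"
    and null_indep: "prob_space.indep_vars M (\<lambda>_. borel) p Sbar"
    and null_nonnull_indep:
      "prob_space.indep_var M
         (PiM Sbar (\<lambda>_. borel)) (\<lambda>\<omega>. restrict (\<lambda>v. p v \<omega>) Sbar)
         (PiM (UNIV - Sbar) (\<lambda>_. borel)) (\<lambda>\<omega>. restrict (\<lambda>v. p v \<omega>) (UNIV - Sbar))"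
  shows "((\<forall>v\<in>Sbar. distr M borel (p v) = unif01)
            \<longrightarrow> (\<forall>v\<in>Sbar. super_uniform M (ptilde E f p v)))
       \<and> (((\<forall>v\<in>Sbar. super_uniform M (p v))
            \<and> (\<forall>v y z. (\<forall>w\<in>desc_set E v. y w \<le> z w)
                     \<and> (\<forall>w. w \<notin> desc_set E v \<longrightarrow> y w = z w)
                     \<longrightarrow> f v y \<le> f v z))
            \<longrightarrow> (\<forall>v\<in>Sbar. super_uniform M (ptilde E f p v)))"
proof -
  note M = assms(1)
  interpret prob_space M by (rule M)
  have CS: "desc_set E v \<subseteq> Sbar" if "v \<in> Sbar" for v
    using that closed by (auto simp: desc_set_def)
  have Cne: "desc_set E v \<noteq> {}" for v by (simp add: desc_set_def)
  have gen: "super_uniform M (ptilde E f p v)"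
    if v: "v \<in> Sbar"
    and inner: "\<And>c y0. 0 \<le> c \<Longrightarrow> c \<le> 1 \<Longrightarrow> emeasure (PiM (desc_set E v) (\<lambda>w. distr M borel (p w)))
       {x\<in>space (PiM (desc_set E v) (\<lambda>w. distr M borel (p w))).
          F_fun (desc_set E v) (f v) (f v (merge_on (desc_set E v) x y0)) (merge_on (desc_set E v) x y0) \<le> c}
        \<le> ennreal c"
    for v
    unfolding super_uniform_def ptilde_def
  proof
    fix c :: real assume c: "c \<in> {0..1}"
    show "measure M {x \<in> space M. F_fun (desc_set E v) (f v) (f v (\<lambda>w. p w x)) (\<lambda>w. p w x) \<le> c} \<le> c"
      by (rule core[OF M p_meas f_meas null_indep null_nonnull_indep CS[OF v] Cne])
         (use c inner in auto)
  qed
  show ?thesis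
  proof (intro conjI impI ballI)
    fix v assume unif: "\<forall>v\<in>Sbar. distr M borel (p v) = unif01" and v: "v \<in> Sbar"
    show "super_uniform M (ptilde E f p v)"
    proof (rule gen[OF v])
      fix c :: real and y0 assume c: "0 \<le> c"
      have "PiM (desc_set E v) (\<lambda>w. distr M borel (p w)) = PiM (desc_set E v) (\<lambda>_. unif01)"
        using unif CS[OF v] by (intro PiM_cong) auto
      then show "emeasure (PiM (desc_set E v) (\<lambda>w. distr M borel (p w)))
       {x\<in>space (PiM (desc_set E v) (\<lambda>w. distr M borel (p w))).
          F_fun (desc_set E v) (f v) (f v (merge_on (desc_set E v) x y0)) (merge_on (desc_set E v) x y0) \<le> c}
        \<le> ennreal c"
        using inner_unif[OF f_meas c] by simp
    qed
  next
    fix v assume h: "(\<forall>v\<in>Sbar. super_uniform M (p v)) \<and>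
             (\<forall>v y z. (\<forall>w\<in>desc_set E v. y w \<le> z w) \<and> (\<forall>w. w \<notin> desc_set E v \<longrightarrow> y w = z w) \<longrightarrow> f v y \<le> f v z)"
      and v: "v \<in> Sbar"
    show "super_uniform M (ptilde E f p v)"
    proof (rule gen[OF v])
      fix c :: real and y0 assume c: "0 \<le> c"
      show "emeasure (PiM (desc_set E v) (\<lambda>w. distr M borel (p w)))
       {x\<in>space (PiM (desc_set E v) (\<lambda>w. distr M borel (p w))).
          F_fun (desc_set E v) (f v) (f v (merge_on (desc_set E v) x y0)) (merge_on (desc_set E v) x y0) \<le> c}
        \<le> ennreal c"
      proof (rule inner_dom[OF _ _ _ f_meas c])
        show "finite (desc_set E v)" by simp
        show "real_distribution (distr M borel (p i))" for i
          by (rule real_distribution_distr[OF p_meas])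
        show "f v y \<le> f v z" if "\<forall>w\<in>desc_set E v. y w \<le> z w" "\<forall>w. w \<notin> desc_set E v \<longrightarrow> y w = z w" for y z
          using h that by blast
        fix i and t :: real assume i: "i \<in> desc_set E v" and t: "0 \<le> t" "t \<le> 1"
        have "i \<in> Sbar" using CS[OF v] i by blast
        then have su: "measure M {x\<in>space M. p i x \<le> t} \<le> t"
          using h t unfolding super_uniform_def by auto
        have "measure (distr M borel (p i)) {..t} = measure M (p i -` {..t} \<inter> space M)"
          by (rule measure_distr[OF p_meas atMost_borel])
        also have "p i -` {..t} \<inter> space M = {x\<in>space M. p i x \<le> t}" by auto
        finally show "measure (distr M borel (p i)) {..t} \<le> t" using su by simp
      qed
    qed
  qed
qed

end
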